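(* Assume $A\ge\varepsilon^2/16$. Let $\phi^0\in\mathcal{G}_N$ and define $\phi^{-1}=\phi^0-\Delta t\,\Delta_N\mu^0$ with $\mu^0=-\nabla_N\cdot(|\nabla_N\phi^0|^2\nabla_N\phi^0)+a\phi^0+2\Delta_N\phi^0+\Delta_N^2\phi^0$. Let $(\phi^m)_{m\ge1}$ be generated by the scheme \[ \frac{\frac32\phi^{k+1}-2\phi^k+\frac12\phi^{k-1}}{\Delta t}=\Delta_N\mu_i^{k+1},\quad k\ge0, \] with $i=1$ or $i=2$, where \[ \mu_1^{k+1}=-\nabla_N\cdot(|\nabla_N\phi^{k+1}|^2\nabla_N\phi^{k+1})+a\phi^{k+1}+2\Delta_N(2\phi^k-\phi^{k-1})-A\Delta t\,\Delta_N(\phi^{k+1}-\phi^k)+\Delta_N^2\phi^{k+1}, \] \[ \mu_2^{k+1}=-\nabla_N\cdot(|\nabla_N\phi^{k+1}|^2\nabla_N\phi^{k+1})-\varepsilon(2\phi^k-\phi^{k-1})-A\Delta t\,\Delta_N(\phi^{k+1}-\phi^k)+(1+\Delta_N)^2\phi^{k+1}. \] Suppose that, for some constant $\tilde C_0$ independent of $h$, \[ E_N(\phi^0)+\frac{\Delta t}{4}\|\nabla_N\mu^0\|_2^2+\Delta t^2\|\nabla_N\Delta_N\mu^0\|_2^2\le\tilde C_0 \quad\text{(for } i=1\text{)}, \] \[ E_N(\phi^0)+\frac{\Delta t}{4}\|\nabla_N\mu^0\|_2^2+\frac{\varepsilon\Delta t^2}{2}\|\Delta_N\mu^0\|_2^2\le\tilde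 C_0\quad\text{(for } i=2\text{)}. \] Then $\|\phi^m\|_{H_N^2}\le\tilde C_1$ for all $m\ge1$, where $\tilde C_1>0$ depends on $\Omega$ and $\tilde C_0$ but is independent of $h$, $\Delta t$ and the final time.
   Context: Let $K\in\mathbb{N}$, $N=2K+1$, $h=1/N$, $\Omega=(0,1)^3$, grid points $(ih,jh,kh)$. $\mathcal{G}_N$ is the space of real grid functions on $\mathbb{Z}^3$ that are $N$-periodic in each index; $\langle f,g\rangle=h^3\sum_{i,j,k=0}^{N-1}f_{i,j,k}g_{i,j,k}$, $\|f\|_p=(h^3\sum|f_{i,j,k}|^p)^{1/p}$ (pointwise Euclidean norm for vector-valued grid functions). Each $f\in\mathcal{G}_N$ has discrete Fourier expansion $f_{i,j,k}=\sum_{\ell,m,n=-K}^K\hat f_{\ell,m,n}\exp(2\pi\mathrm{i}(\ell x_i+my_j+nz_k))$; $\mathcal{D}_x$ multiplies coefficients by $2\pi\mathrm{i}\ell$ (similarly $\mathcal{D}_y,\mathcal{D}_z$), $\nabla_Nf=(\mathcal{D}_xf,\mathcal{D}_yf,\mathcal{D}_zf)$, $\nabla_N\cdot(f_1,f_2,f_3)=\mathcal{D}_xf_1+\mathcal{D}_yf_2+\mathcal{D}_zf_3$, $\Delta_N$ multiplies coefficients by $-4\pi^2(\ell^2+m^2+n^2)$; nonlinear products are pointwise. $\|f\|_{H_N^2}^2=\|f\|_2^2+\|\nabla_Nf\|_2^2+\|\Delta_Nf\|_2^2$. The discrete energy is $E_N(\phi)=\frac14\|\nabla_N\phi\|_4^4+\frac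 a2\|\phi\|_2^2-\|\nabla_N\phi\|_2^2+\frac12\|\Delta_N\phi\|_2^2$. Parameters: $\Delta t>0$, $0<\varepsilon<1$, $a=1-\varepsilon>0$, $A$ a constant. *)

theory Defs
  imports Complex_Main
begin

text \<open>Grid functions on Z^3; a grid function belongs to G_N iff it is N-periodic in each index.
  Here N = 2K+1 and h = 1/N.\<close>

type_synonym grid = "int \<times> int \<times> int \<Rightarrow> real"

definition NN :: "nat \<Rightarrow> nat" where "NN K = 2 * K + 1"

definition hh :: "nat \<Rightarrow> real" where "hh K = 1 / real (NN K)"

definition gridfun :: "nat \<Rightarrow> grid \<Rightarrow> bool" where
  "gridfun K f \<longleftrightarrow> (\<forall>i j k. f (i + int (NN K), j, k) = f (i, j, k)
      \<and> f (i, j + int (NN K), k) = f (i, j, k) \<and> f (i, j, k + int (NN K)) = f (i, j, k))"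

definition idx :: "nat \<Rightarrow> int set" where "idx K = {0..<int (NN K)}"

definition modes :: "nat \<Rightarrow> int set" where "modes K = {- int K..int K}"

definition gsum :: "nat \<Rightarrow> grid \<Rightarrow> real" where
  "gsum K f = hh K ^ 3 * (\<Sum>i\<in>idx K. \<Sum>j\<in>idx K. \<Sum>k\<in>idx K. f (i, j, k))"

definition ginner :: "nat \<Rightarrow> grid \<Rightarrow> grid \<Rightarrow> real" where
  "ginner K f g = gsum K (\<lambda>x. f x * g x)"

definition lpnorm :: "nat \<Rightarrow> real \<Rightarrow> grid \<Rightarrow> real" where
  "lpnorm K p f = (gsum K (\<lambda>x. \<bar>f x\<bar> powr p)) powr (1 / p)"

type_synonym vgrid = "grid \<times> grid \<times> grid"

definition vlpnorm :: "nat \<Rightarrow> real \<Rightarrow> vgrid \<Rightarrow> real" where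
  "vlpnorm K p g = (case g of (g1, g2, g3) \<Rightarrow>
      lpnorm K p (\<lambda>x. sqrt ((g1 x)\<^sup>2 + (g2 x)\<^sup>2 + (g3 x)\<^sup>2)))"

text \<open>Discrete Fourier coefficients: f_{ijk} = sum_{l,m,n=-K..K} fhat_{lmn} exp(2 pi i (l x_i + m y_j + n z_k)),
  x_i = i h.\<close>
definition dft :: "nat \<Rightarrow> grid \<Rightarrow> int \<times> int \<times> int \<Rightarrow> complex" where
  "dft K f lmn = (case lmn of (l, m, n) \<Rightarrow>
     (1 / of_nat (NN K ^ 3)) * (\<Sum>i\<in>idx K. \<Sum>j\<in>idx K. \<Sum>k\<in>idx K.
        of_real (f (i, j, k)) * cis (- 2 * pi * (real_of_int (l * i + m * j + n * k)) * hh K)))"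

text \<open>Spectral (Fourier multiplier) operator with symbol sigma; for real f and the symbols used
  below the sum is real, we take its real part.\<close>
definition spec :: "nat \<Rightarrow> (int \<times> int \<times> int \<Rightarrow> complex) \<Rightarrow> grid \<Rightarrow> grid" where
  "spec K \<sigma> f x = (case x of (i, j, k) \<Rightarrow>
     Re (\<Sum>l\<in>modes K. \<Sum>m\<in>modes K. \<Sum>n\<in>modes K.
        \<sigma> (l, m, n) * dft K f (l, m, n) *
        cis (2 * pi * (real_of_int (l * i + m * j + n * k)) * hh K)))"

definition Dx :: "nat \<Rightarrow> grid \<Rightarrow> grid" where
  "Dx K = spec K (\<lambda>(l, m, n). \<i> * complex_of_real (2 * pi * real_of_int l))"
definition Dy :: "nat \<Rightarrow> grid \<Rightarrow> grid" where
  "Dy K = spec K (\<lambda>(l, m, n). \<i> * complex_of_real (2 * pi * real_of_int m))"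
definition Dz :: "nat \<Rightarrow> grid \<Rightarrow> grid" where
  "Dz K = spec K (\<lambda>(l, m, n). \<i> * complex_of_real (2 * pi * real_of_int n))"

definition Lap :: "nat \<Rightarrow> grid \<Rightarrow> grid" where
  "Lap K = spec K (\<lambda>(l, m, n). complex_of_real (- 4 * pi\<^sup>2 * real_of_int (l\<^sup>2 + m\<^sup>2 + n\<^sup>2)))"

definition grad :: "nat \<Rightarrow> grid \<Rightarrow> vgrid" where
  "grad K f = (Dx K f, Dy K f, Dz K f)"

definition dvg :: "nat \<Rightarrow> vgrid \<Rightarrow> grid" where
  "dvg K g = (case g of (g1, g2, g3) \<Rightarrow> (\<lambda>x. Dx K g1 x + Dy K g2 x + Dz K g3 x))"

definition nlterm :: "nat \<Rightarrow> grid \<Rightarrow> grid" where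
  "nlterm K f = (let s = (\<lambda>x. (Dx K f x)\<^sup>2 + (Dy K f x)\<^sup>2 + (Dz K f x)\<^sup>2) in
     dvg K (\<lambda>x. s x * Dx K f x, \<lambda>x. s x * Dy K f x, \<lambda>x. s x * Dz K f x))"

definition H2norm :: "nat \<Rightarrow> grid \<Rightarrow> real" where
  "H2norm K f = sqrt ((lpnorm K 2 f)\<^sup>2 + (vlpnorm K 2 (grad K f))\<^sup>2 + (lpnorm K 2 (Lap K f))\<^sup>2)"

definition energy :: "nat \<Rightarrow> real \<Rightarrow> grid \<Rightarrow> real" where
  "energy K a \<phi> = 1/4 * (vlpnorm K 4 (grad K \<phi>)) ^ 4 + a / 2 * (lpnorm K 2 \<phi>)\<^sup>2
      - (vlpnorm K 2 (grad K \<phi>))\<^sup>2 + 1/2 * (lpnorm K 2 (Lap K \<phi>))\<^sup>2"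

definition mu0 :: "nat \<Rightarrow> real \<Rightarrow> grid \<Rightarrow> grid" where
  "mu0 K a \<phi> = (\<lambda>x. - nlterm K \<phi> x + a * \<phi> x + 2 * Lap K \<phi> x + Lap K (Lap K \<phi>) x)"

text \<open>mu_1^{k+1}, arguments: new = phi^{k+1}, cur = phi^k, old = phi^{k-1}\<close>
definition mu1 :: "nat \<Rightarrow> real \<Rightarrow> real \<Rightarrow> real \<Rightarrow> grid \<Rightarrow> grid \<Rightarrow> grid \<Rightarrow> grid" where
  "mu1 K a A dt new cur old = (\<lambda>x. - nlterm K new x + a * new x
      + 2 * Lap K (\<lambda>y. 2 * cur y - old y) x
      - A * dt * Lap K (\<lambda>y. new y - cur y) x
      + Lap K (Lap K new) x)"

definition IdLap :: "nat \<Rightarrow> grid \<Rightarrow> grid" where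
  "IdLap K f = (\<lambda>x. f x + Lap K f x)"

definition mu2 :: "nat \<Rightarrow> real \<Rightarrow> real \<Rightarrow> real \<Rightarrow> grid \<Rightarrow> grid \<Rightarrow> grid \<Rightarrow> grid" where
  "mu2 K \<epsilon> A dt new cur old = (\<lambda>x. - nlterm K new x
      - \<epsilon> * (2 * cur x - old x)
      - A * dt * Lap K (\<lambda>y. new y - cur y) x
      + IdLap K (IdLap K new) x)"

end

theory Submission
  imports Defs
begin

lemma NN_pos: "NN K > 0" by (simp add: NN_def)

lemma hh_N: "hh K * real (NN K) = 1"
  using NN_pos[of K] by (simp add: hh_def)

lemma geo1:
  fixes c d :: int
  assumes "\<not> int (NN K) dvd d"
  shows "(\<Sum>j\<in>{c..<c + int (NN K)}. cis (2*pi*real_of_int (d*j) * hh K)) = 0"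
proof -
  define N where "N = NN K"
  have N0: "N > 0" using NN_pos by (simp add: N_def)
  define w where "w = cis (2*pi*real_of_int d * hh K)"
  have hN: "hh K = 1 / real N" by (simp add: hh_def N_def)
  have w1: "w \<noteq> 1"
  proof
    assume "w = 1"
    then obtain k :: int where "2*pi*real_of_int d * hh K = k * 2 * pi"
      by (auto simp: w_def complex_eq_iff cos_one_2pi_int)
    hence "real_of_int d = real N * k" using N0 by (simp add: hN field_simps)
    hence "d = int N * k" by (metis of_int_eq_iff of_int_mult of_int_of_nat_eq)
    thus False using assms by (simp add: N_def)
  qed
  have wN: "w ^ N = 1"
  proof -
    have "w ^ N = cis (2*pi*real_of_int d)" using N0
      by (simp add: w_def DeMoivre hN field_simps)
    also have "\<dots> = 1" by (rule cis_multiple_2pi) simp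
    finally show ?thesis .
  qed
  have "{c..<c + int N} = (\<lambda>n. c + int n) ` {..<N}"
  proof -
    have "x \<in> (\<lambda>n. c + int n) ` {..<N}" if "x \<in> {c..<c + int N}" for x
      using that by (intro image_eqI[of _ _ "nat (x - c)"]) auto
    thus ?thesis by auto
  qed
  hence "(\<Sum>j\<in>{c..<c + int N}. cis (2*pi*real_of_int (d*j) * hh K))
      = (\<Sum>n<N. cis (2*pi*real_of_int (d*(c + int n)) * hh K))"
    by (simp add: sum.reindex inj_on_def)
  also have "\<dots> = (\<Sum>n<N. cis (2*pi*real_of_int (d*c) * hh K) * w ^ n)"
    by (intro sum.cong refl) (simp add: w_def DeMoivre cis_mult algebra_simps)
  also have "\<dots> = cis (2*pi*real_of_int (d*c) * hh K) * ((w ^ N - 1) / (w - 1))"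
    by (simp add: sum_distrib_left[symmetric] geometric_sum[OF w1])
  also have "\<dots> = 0" by (simp add: wN)
  finally show ?thesis by (simp add: N_def)
qed

lemma geo1':
  fixes c d :: int
  assumes "\<bar>d\<bar> < int (NN K)"
  shows "(\<Sum>j\<in>{c..<c + int (NN K)}. cis (2*pi*real_of_int (d*j) * hh K)) = (if d = 0 then of_nat (NN K) else 0)"
proof (cases "d = 0")
  case True thus ?thesis by simp
next
  case False
  have "\<not> int (NN K) dvd d"
  proof
    assume "int (NN K) dvd d"
    then obtain k where "d = int (NN K) * k" by blast
    with False have "k \<noteq> 0" by auto
    hence "\<bar>k\<bar> \<ge> 1" by linarith
    hence "int (NN K) * 1 \<le> int (NN K) * \<bar>k\<bar>" by (intro mult_left_mono) auto
    moreover have "\<bar>d\<bar> = int (NN K) * \<bar>k\<bar>" using \<open>d = int (NN K) * k\<close> by (simp add: abs_mult)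
    ultimately show False using assms by linarith
  qed
  thus ?thesis using geo1 False by simp
qed

definition II :: "nat \<Rightarrow> (int\<times>int\<times>int) set" where "II K = idx K \<times> idx K \<times> idx K"
definition MM :: "nat \<Rightarrow> (int\<times>int\<times>int) set" where "MM K = modes K \<times> modes K \<times> modes K"
definition dot :: "int\<times>int\<times>int \<Rightarrow> int\<times>int\<times>int \<Rightarrow> int" where
 "dot l x = fst l * fst x + fst (snd l) * fst (snd x) + snd (snd l) * snd (snd x)"
definition ee :: "nat \<Rightarrow> int\<times>int\<times>int \<Rightarrow> int\<times>int\<times>int \<Rightarrow> complex" where
 "ee K l x = cis (2 * pi * real_of_int (dot l x) * hh K)"

lemma idx_box: "idx K = {0..<0 + int (NN K)}" by (simp add: idx_def)
lemma modes_box: "modes K = {- int K..<- int K + int (NN K)}"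
  by (auto simp: modes_def NN_def)

lemma sum_prod3:
  fixes f g k :: "int \<Rightarrow> complex"
  shows "(\<Sum>x\<in>A\<times>B\<times>C. f (fst x) * g (fst (snd x)) * k (snd (snd x)))
     = sum f A * sum g B * sum k C"
proof -
  have "(\<Sum>x\<in>A\<times>B\<times>C. f (fst x) * g (fst (snd x)) * k (snd (snd x)))
     = (\<Sum>x\<in>A. \<Sum>y\<in>B. \<Sum>z\<in>C. f x * g y * k z)"
    by (simp add: sum.cartesian_product')
  also have "\<dots> = (\<Sum>x\<in>A. f x * (\<Sum>y\<in>B. g y * (\<Sum>z\<in>C. k z)))"
    by (simp add: sum_distrib_left mult.assoc)
  also have "\<dots> = (\<Sum>x\<in>A. f x * (sum g B * sum k C))"
    by (simp add: sum_distrib_right)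
  also have "\<dots> = sum f A * (sum g B * sum k C)"
    by (simp add: sum_distrib_right)
  also have "\<dots> = sum f A * sum g B * sum k C" by (simp add: mult.assoc)
  finally show ?thesis .
qed

lemma orth_box:
  fixes a b :: "int\<times>int\<times>int" and c :: int
  assumes S: "S = {c..<c + int (NN K)}"
    and d1: "\<bar>fst a - fst b\<bar> < int (NN K)"
    and d2: "\<bar>fst (snd a) - fst (snd b)\<bar> < int (NN K)"
    and d3: "\<bar>snd (snd a) - snd (snd b)\<bar> < int (NN K)"
  shows "(\<Sum>x\<in>S\<times>S\<times>S. ee K a x * cnj (ee K b x)) = (if a = b then of_nat (NN K ^ 3) else 0)"
proof -
  define c1 where "c1 = (\<lambda>j. cis (2*pi*real_of_int ((fst a - fst b)*j) * hh K))"
  define c2 where "c2 = (\<lambda>j. cis (2*pi*real_of_int ((fst (snd a) - fst (snd b))*j) * hh K))"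
  define c3 where "c3 = (\<lambda>j. cis (2*pi*real_of_int ((snd (snd a) - snd (snd b))*j) * hh K))"
  have e: "ee K a x * cnj (ee K b x) = c1 (fst x) * c2 (fst (snd x)) * c3 (snd (snd x))" for x
    by (simp add: ee_def dot_def c1_def c2_def c3_def cis_cnj cis_mult algebra_simps)
  have "(\<Sum>x\<in>S\<times>S\<times>S. ee K a x * cnj (ee K b x)) = sum c1 S * sum c2 S * sum c3 S"
    unfolding e by (rule sum_prod3)
  also have "\<dots> = (if a = b then of_nat (NN K ^ 3) else 0)"
    unfolding S c1_def c2_def c3_def geo1'[OF d1] geo1'[OF d2] geo1'[OF d3]
    by (cases a; cases b) (auto simp: power3_eq_cube)
  finally show ?thesis .
qed

lemma NN_real: "real (NN K) = 2 * real K + 1" by (simp add: NN_def)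

lemma gsum_alt: "gsum K f = hh K ^ 3 * (\<Sum>x\<in>II K. f x)"
  by (simp add: gsum_def II_def sum.cartesian_product')

lemma dft_alt: "dft K f l = (1 / of_nat (NN K ^ 3)) * (\<Sum>x\<in>II K. of_real (f x) * cnj (ee K l x))"
  by (cases l) (simp add: dft_def II_def sum.cartesian_product' ee_def dot_def cis_cnj)

lemma spec_alt: "spec K \<sigma> f x = Re (\<Sum>l\<in>MM K. \<sigma> l * dft K f l * ee K l x)"
  by (cases x) (simp add: spec_def MM_def sum.cartesian_product' ee_def dot_def)

lemma ee_sym: "ee K l x = ee K x l"
  by (simp add: ee_def dot_def mult.commute)

lemma MM_bound: "l \<in> MM K \<Longrightarrow> \<bar>fst l\<bar> \<le> int K \<and> \<bar>fst (snd l)\<bar> \<le> int K \<and> \<bar>snd (snd l)\<bar> \<le> int K"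
  by (auto simp: MM_def modes_def)

lemma II_bound: "x \<in> II K \<Longrightarrow> 0 \<le> fst x \<and> fst x < int (NN K) \<and> 0 \<le> fst (snd x) \<and> fst (snd x) < int (NN K)
   \<and> 0 \<le> snd (snd x) \<and> snd (snd x) < int (NN K)"
  by (auto simp: II_def idx_def)

lemma orth_II:
  assumes "a \<in> MM K" "b \<in> MM K"
  shows "(\<Sum>x\<in>II K. ee K a x * cnj (ee K b x)) = (if a = b then of_nat (NN K ^ 3) else 0)"
  unfolding II_def
  by (rule orth_box[OF idx_box]) (use MM_bound[OF assms(1)] MM_bound[OF assms(2)] in \<open>auto simp: NN_def\<close>)

lemma orth_MM:
  assumes "x \<in> II K" "y \<in> II K"
  shows "(\<Sum>l\<in>MM K. ee K l x * cnj (ee K l y)) = (if x = y then of_nat (NN K ^ 3) else 0)"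
  unfolding MM_def ee_sym[of K _ x] ee_sym[of K _ y]
  by (rule orth_box[OF modes_box]) (use II_bound[OF assms(1)] II_bound[OF assms(2)] in \<open>auto\<close>)

lemma finite_II[simp]: "finite (II K)" by (simp add: II_def idx_def)
lemma finite_MM[simp]: "finite (MM K)" by (simp add: MM_def modes_def)

lemma swap3: "(\<Sum>x\<in>A. \<Sum>y\<in>B. \<Sum>z\<in>C. G x y z) = (\<Sum>y\<in>B. \<Sum>z\<in>C. \<Sum>x\<in>A. G x y z)"
  by (subst sum.swap) (rule sum.cong[OF refl], rule sum.swap)

lemma NN3_nz: "(of_nat (NN K ^ 3) :: complex) \<noteq> 0" using NN_pos[of K] by simp

lemma inversion:
  assumes "x \<in> II K"
  shows "(\<Sum>l\<in>MM K. dft K f l * ee K l x) = of_real (f x)"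
proof -
  have "(\<Sum>l\<in>MM K. dft K f l * ee K l x)
     = (\<Sum>l\<in>MM K. \<Sum>y\<in>II K. (1 / of_nat (NN K ^ 3)) * of_real (f y) * (ee K l x * cnj (ee K l y)))"
    by (simp add: dft_alt sum_distrib_left sum_distrib_right mult_ac)
  also have "\<dots> = (\<Sum>y\<in>II K. (1 / of_nat (NN K ^ 3)) * of_real (f y) * (\<Sum>l\<in>MM K. ee K l x * cnj (ee K l y)))"
    by (subst sum.swap) (simp add: sum_distrib_left)
  also have "\<dots> = (\<Sum>y\<in>II K. if y = x then of_real (f x) else 0)"
    by (intro sum.cong refl) (use assms NN3_nz[of K] in \<open>auto simp: orth_MM\<close>)
  also have "\<dots> = of_real (f x)" using assms by (simp add: sum.delta')
  finally show ?thesis .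
qed

definition neg :: "int\<times>int\<times>int \<Rightarrow> int\<times>int\<times>int" where
  "neg l = (- fst l, - fst (snd l), - snd (snd l))"

lemma ee_neg: "ee K (neg l) x = cnj (ee K l x)"
  unfolding ee_def neg_def dot_def cis_cnj by (rule arg_cong[where f=cis]) (simp add: algebra_simps)

lemma neg_neg[simp]: "neg (neg l) = l" by (simp add: neg_def)

lemma neg_MM: "l \<in> MM K \<Longrightarrow> neg l \<in> MM K"
  by (auto simp: neg_def MM_def modes_def)

lemma sum_MM_neg: "(\<Sum>l\<in>MM K. g (neg l)) = (\<Sum>l\<in>MM K. g l)"
  by (rule sum.reindex_bij_witness[of _ neg neg]) (auto simp: neg_MM)

lemma dft_neg: "dft K f (neg l) = cnj (dft K f l)"
  by (simp add: dft_alt ee_neg)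

definition herm :: "nat \<Rightarrow> (int\<times>int\<times>int \<Rightarrow> complex) \<Rightarrow> bool" where
  "herm K \<sigma> \<longleftrightarrow> (\<forall>l\<in>MM K. \<sigma> (neg l) = cnj (\<sigma> l))"

lemma spec_complex:
  assumes "herm K \<sigma>"
  shows "of_real (spec K \<sigma> f x) = (\<Sum>l\<in>MM K. \<sigma> l * dft K f l * ee K l x)"
proof -
  let ?T = "\<Sum>l\<in>MM K. \<sigma> l * dft K f l * ee K l x"
  have "cnj ?T = (\<Sum>l\<in>MM K. \<sigma> (neg l) * dft K f (neg l) * ee K (neg l) x)"
    using assms by (simp add: herm_def dft_neg ee_neg)
  also have "\<dots> = ?T" by (rule sum_MM_neg)
  finally have "cnj ?T = ?T" .
  hence "?T \<in> \<real>" using Reals_cnj_iff by blast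
  thus ?thesis unfolding spec_alt by (rule of_real_Re)
qed

lemma dft_spec:
  assumes "herm K \<sigma>" "l \<in> MM K"
  shows "dft K (spec K \<sigma> f) l = \<sigma> l * dft K f l"
proof -
  have "dft K (spec K \<sigma> f) l
     = (1 / of_nat (NN K ^ 3)) * (\<Sum>x\<in>II K. (\<Sum>l'\<in>MM K. \<sigma> l' * dft K f l' * ee K l' x) * cnj (ee K l x))"
    by (simp only: dft_alt spec_complex[OF assms(1)])
  also have "\<dots> = (1 / of_nat (NN K ^ 3)) * (\<Sum>x\<in>II K. \<Sum>l'\<in>MM K. \<sigma> l' * dft K f l' * (ee K l' x * cnj (ee K l x)))"
    by (simp only: sum_distrib_right mult.assoc)
  also have "\<dots> = (1 / of_nat (NN K ^ 3)) * (\<Sum>l'\<in>MM K. \<sigma> l' * dft K f l' * (\<Sum>x\<in>II K. ee K l' x * cnj (ee K l x)))"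
    by (subst sum.swap) (simp add: sum_distrib_left)
  also have "\<dots> = (1 / of_nat (NN K ^ 3)) * (\<Sum>l'\<in>MM K. if l' = l then \<sigma> l * dft K f l * of_nat (NN K ^ 3) else 0)"
    by (intro arg_cong2[where f="(*)"] refl sum.cong) (use assms(2) in \<open>auto simp: orth_II\<close>)
  also have "\<dots> = \<sigma> l * dft K f l" using assms(2) NN3_nz[of K] by (simp add: sum.delta')
  finally show ?thesis .
qed

lemma hh3: "hh K ^ 3 * real (NN K ^ 3) = 1"
  by (metis hh_N power_mult_distrib of_nat_power one_power2 power_one)

lemma cnj4: "(a*b)*cnj(c*d) = a*cnj c*(b*cnj (d::complex))"
  unfolding complex_cnj_mult by (simp only: ac_simps)

lemma orth_collapse:
  assumes "l \<in> MM K"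
  shows "(\<Sum>l'\<in>MM K. c l' * (\<Sum>x\<in>II K. ee K l x * cnj (ee K l' x))) = c l * of_nat (NN K ^ 3)"
proof -
  have "(\<Sum>l'\<in>MM K. c l' * (\<Sum>x\<in>II K. ee K l x * cnj (ee K l' x)))
     = (\<Sum>l'\<in>MM K. if l' = l then c l * of_nat (NN K ^ 3) else 0)"
    by (rule sum.cong[OF refl]) (use assms in \<open>auto simp: orth_II\<close>)
  also have "\<dots> = c l * of_nat (NN K ^ 3)" using assms by (simp add: sum.delta')
  finally show ?thesis .
qed

lemma parseval:
  "of_real (gsum K (\<lambda>x. f x * g x)) = (\<Sum>l\<in>MM K. dft K f l * cnj (dft K g l))"
proof -
  have "of_real (gsum K (\<lambda>x. f x * g x))
      = of_real (hh K ^ 3) * (\<Sum>x\<in>II K. of_real (f x) * cnj (of_real (g x)) :: complex)"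
    by (simp add: gsum_alt)
  also have "\<dots> = of_real (hh K ^ 3) * (\<Sum>x\<in>II K. (\<Sum>l\<in>MM K. dft K f l * ee K l x) * cnj (\<Sum>l'\<in>MM K. dft K g l' * ee K l' x))"
    by (intro arg_cong2[where f="(*)"] refl sum.cong) (simp_all add: inversion)
  also have "\<dots> = of_real (hh K ^ 3) * (\<Sum>x\<in>II K. \<Sum>l\<in>MM K. \<Sum>l'\<in>MM K. (dft K f l * ee K l x) * cnj (dft K g l' * ee K l' x))"
    by (simp only: cnj_sum sum_product)
  also have "\<dots> = of_real (hh K ^ 3) * (\<Sum>x\<in>II K. \<Sum>l\<in>MM K. \<Sum>l'\<in>MM K. dft K f l * cnj (dft K g l') * (ee K l x * cnj (ee K l' x)))"
    apply (rule arg_cong2[where f="(*)"], rule refl)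
    apply (rule sum.cong[OF refl])+
    apply (rule cnj4)
    done
  also have "\<dots> = of_real (hh K ^ 3) * (\<Sum>l\<in>MM K. \<Sum>l'\<in>MM K. dft K f l * cnj (dft K g l') * (\<Sum>x\<in>II K. ee K l x * cnj (ee K l' x)))"
    by (subst swap3) (simp only: sum_distrib_left)
  also have "\<dots> = of_real (hh K ^ 3) * (\<Sum>l\<in>MM K. dft K f l * cnj (dft K g l) * of_nat (NN K ^ 3))"
    apply (rule arg_cong2[where f="(*)"], rule refl, rule sum.cong[OF refl])
    by (rule orth_collapse)
  also have "\<dots> = (\<Sum>l\<in>MM K. dft K f l * cnj (dft K g l))"
  proof -
    have "of_real (hh K ^ 3) * (of_nat (NN K ^ 3) :: complex) = 1"
      using hh3[of K] by (metis of_real_1 of_real_mult of_real_of_nat_eq)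
    thus ?thesis by (simp add: sum_distrib_left sum_distrib_right[symmetric] mult_ac)
  qed
  finally show ?thesis .
qed


lemma dft_add: "dft K (\<lambda>x. f x + g x) l = dft K f l + dft K g l"
  by (simp add: dft_alt sum.distrib ring_distribs)
lemma dft_diff: "dft K (\<lambda>x. f x - g x) l = dft K f l - dft K g l"
  by (simp add: dft_alt sum_subtractf ring_distribs)
lemma dft_uminus: "dft K (\<lambda>x. - f x) l = - dft K f l"
  by (simp add: dft_alt sum_negf)
lemma dft_cmult: "dft K (\<lambda>x. c * f x) l = of_real c * dft K f l"
  by (simp add: dft_alt sum_distrib_left mult_ac)
lemma dft_div: "dft K (\<lambda>x. f x / c) l = dft K f l / of_real c"
proof -
  have "dft K (\<lambda>x. f x / c) l = (1 / of_nat (NN K ^ 3)) * ((\<Sum>x\<in>II K. of_real (f x) * cnj (ee K l x)) / of_real c)"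
    unfolding dft_alt sum_divide_distrib by (simp add: of_real_divide)
  also have "\<dots> = dft K f l / of_real c" unfolding dft_alt by (rule times_divide_eq_right)
  finally show ?thesis .
qed

definition lam :: "int\<times>int\<times>int \<Rightarrow> real" where
  "lam l = 4*pi^2*real_of_int ((fst l)^2 + (fst (snd l))^2 + (snd (snd l))^2)"

lemma lam_nonneg: "lam l \<ge> 0" by (simp add: lam_def)

lemma lam_cases: "lam l = 0 \<or> lam l \<ge> 4"
proof -
  define s where "s = (fst l)^2 + (fst (snd l))^2 + (snd (snd l))^2"
  have "s \<ge> 0" by (simp add: s_def)
  hence s01: "s = 0 \<or> s \<ge> 1" by linarith
  have p1: "pi^2 \<ge> 1" by (rule one_le_power) (use pi_ge_two in linarith)
  have ls: "lam l = 4 * (pi^2 * real_of_int s)" by (simp add: lam_def s_def)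
  show ?thesis
  proof (cases "s = 0")
    case True thus ?thesis by (simp add: ls)
  next
    case False
    hence "real_of_int s \<ge> 1" using s01 by simp
    hence "1 * 1 \<le> pi^2 * real_of_int s" using p1 by (intro mult_mono) auto
    thus ?thesis by (simp add: ls)
  qed
qed

lemma lam_zero: "l = (0,0,0) \<Longrightarrow> lam l = 0" by (simp add: lam_def)
lemma zero_MM: "(0,0,0) \<in> MM K" by (simp add: MM_def modes_def)

lemma Lap_spec: "Lap K = spec K (\<lambda>l. of_real (- lam l))"
  unfolding Lap_def lam_def by (rule arg_cong[where f="spec K"]) (auto simp: fun_eq_iff)
lemma Dx_spec: "Dx K = spec K (\<lambda>l. \<i> * of_real (2 * pi * real_of_int (fst l)))"
  unfolding Dx_def by (rule arg_cong[where f="spec K"]) (auto simp: fun_eq_iff)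
lemma Dy_spec: "Dy K = spec K (\<lambda>l. \<i> * of_real (2 * pi * real_of_int (fst (snd l))))"
  unfolding Dy_def by (rule arg_cong[where f="spec K"]) (auto simp: fun_eq_iff)
lemma Dz_spec: "Dz K = spec K (\<lambda>l. \<i> * of_real (2 * pi * real_of_int (snd (snd l))))"
  unfolding Dz_def by (rule arg_cong[where f="spec K"]) (auto simp: fun_eq_iff)

lemma herm_Lap: "herm K (\<lambda>l. of_real (- lam l))" by (simp add: herm_def lam_def neg_def)
lemma herm_Dx: "herm K (\<lambda>l. \<i> * of_real (2 * pi * real_of_int (fst l)))" by (simp add: herm_def neg_def)
lemma herm_Dy: "herm K (\<lambda>l. \<i> * of_real (2 * pi * real_of_int (fst (snd l))))" by (simp add: herm_def neg_def)
lemma herm_Dz: "herm K (\<lambda>l. \<i> * of_real (2 * pi * real_of_int (snd (snd l))))" by (simp add: herm_def neg_def)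

lemma dft_Lap: "l \<in> MM K \<Longrightarrow> dft K (Lap K g) l = of_real (- lam l) * dft K g l"
  unfolding Lap_spec by (rule dft_spec[OF herm_Lap])
lemma dft_Dx: "l \<in> MM K \<Longrightarrow> dft K (Dx K g) l = \<i> * of_real (2 * pi * real_of_int (fst l)) * dft K g l"
  unfolding Dx_spec by (rule dft_spec[OF herm_Dx])
lemma dft_Dy: "l \<in> MM K \<Longrightarrow> dft K (Dy K g) l = \<i> * of_real (2 * pi * real_of_int (fst (snd l))) * dft K g l"
  unfolding Dy_spec by (rule dft_spec[OF herm_Dy])
lemma dft_Dz: "l \<in> MM K \<Longrightarrow> dft K (Dz K g) l = \<i> * of_real (2 * pi * real_of_int (snd (snd l))) * dft K g l"
  unfolding Dz_spec by (rule dft_spec[OF herm_Dz])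

lemma spec_diff: "spec K \<sigma> (\<lambda>x. f x - g x) x = spec K \<sigma> f x - spec K \<sigma> g x"
  by (simp add: spec_alt dft_diff ring_distribs sum_subtractf)

lemma gsum_sq: "gsum K (\<lambda>x. f x * f x) = (\<Sum>l\<in>MM K. (cmod (dft K f l))\<^sup>2)"
proof -
  have "complex_of_real (gsum K (\<lambda>x. f x * f x)) = (\<Sum>l\<in>MM K. dft K f l * cnj (dft K f l))"
    by (rule parseval)
  also have "\<dots> = of_real (\<Sum>l\<in>MM K. (cmod (dft K f l))\<^sup>2)"
    unfolding of_real_sum complex_norm_square by simp
  finally show ?thesis using of_real_eq_iff by blast
qed

lemma gsum_mono: "(\<And>x. f x \<le> g x) \<Longrightarrow> gsum K f \<le> gsum K g"
  unfolding gsum_def by (intro mult_left_mono sum_mono) (auto simp: hh_def)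

lemma gsum_nonneg: "(\<And>x. 0 \<le> f x) \<Longrightarrow> 0 \<le> gsum K f"
  using gsum_mono[of "\<lambda>_. 0" f K] by (simp add: gsum_def)

lemma gsum_add: "gsum K (\<lambda>x. f x + g x) = gsum K f + gsum K g"
  by (simp add: gsum_alt sum.distrib ring_distribs)
lemma gsum_minus: "gsum K (\<lambda>x. - f x) = - gsum K f"
  by (simp add: gsum_alt sum_negf)
lemma gsum_cmult: "gsum K (\<lambda>x. c * f x) = c * gsum K f"
  by (simp only: gsum_alt sum_distrib_left[symmetric]) (rule mult.left_commute)

lemma lpnorm2: "(lpnorm K 2 f)\<^sup>2 = gsum K (\<lambda>x. f x * f x)"
proof -
  have e: "(\<lambda>x. \<bar>f x\<bar> powr 2) = (\<lambda>x. f x * f x)"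
    by (auto simp: fun_eq_iff power2_eq_square)
  have "0 \<le> gsum K (\<lambda>x. f x * f x)" by (rule gsum_nonneg) simp
  thus ?thesis unfolding lpnorm_def e
    by (simp add: powr_half_sqrt)
qed

lemma vlpnorm2: "(vlpnorm K 2 (a, b, c))\<^sup>2 = gsum K (\<lambda>x. a x * a x) + gsum K (\<lambda>x. b x * b x) + gsum K (\<lambda>x. c x * c x)"
proof -
  have "(vlpnorm K 2 (a, b, c))\<^sup>2 = gsum K (\<lambda>x. sqrt ((a x)\<^sup>2 + (b x)\<^sup>2 + (c x)\<^sup>2) * sqrt ((a x)\<^sup>2 + (b x)\<^sup>2 + (c x)\<^sup>2))"
    by (simp add: vlpnorm_def lpnorm2)
  also have "\<dots> = gsum K (\<lambda>x. a x * a x + b x * b x + c x * c x)"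
    by (simp add: power2_eq_square)
  finally show ?thesis by (simp add: gsum_add)
qed

definition Q4 :: "nat \<Rightarrow> grid \<Rightarrow> real" where
  "Q4 K f = gsum K (\<lambda>x. ((Dx K f x)\<^sup>2 + (Dy K f x)\<^sup>2 + (Dz K f x)\<^sup>2)\<^sup>2)"

lemma vlpnorm4: "(vlpnorm K 4 (grad K f)) ^ 4 = Q4 K f"
proof -
  let ?s = "\<lambda>x. (Dx K f x)\<^sup>2 + (Dy K f x)\<^sup>2 + (Dz K f x)\<^sup>2"
  have e: "(\<lambda>x. \<bar>sqrt (?s x)\<bar> powr 4) = (\<lambda>x. (?s x)\<^sup>2)"
  proof
    fix x
    have "\<bar>sqrt (?s x)\<bar> powr 4 = (sqrt (?s x)) ^ 4" by (simp add: powr_numeral)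
    also have "\<dots> = ((sqrt (?s x))\<^sup>2)\<^sup>2" by (simp only: power_mult[symmetric]) simp
    also have "\<dots> = (?s x)\<^sup>2" by simp
    finally show "\<bar>sqrt (?s x)\<bar> powr 4 = (?s x)\<^sup>2" .
  qed
  have lp: "lpnorm K 4 (\<lambda>x. sqrt (?s x)) = (Q4 K f) powr (1/4)"
    unfolding lpnorm_def e Q4_def by simp
  have nn: "0 \<le> Q4 K f" unfolding Q4_def by (rule gsum_nonneg) simp
  have "(vlpnorm K 4 (grad K f)) ^ 4 = ((Q4 K f) powr (1/4)) ^ 4"
    unfolding vlpnorm_def grad_def by (simp only: prod.case lp)
  also have "\<dots> = Q4 K f"
  proof (cases "Q4 K f = 0")
    case True thus ?thesis by simp
  next
    case False
    hence pos: "Q4 K f > 0" using nn by simp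
    have "((Q4 K f) powr (1/4)) ^ 4 = ((Q4 K f) powr (1/4)) powr (real 4)"
      using pos by (subst powr_realpow) auto
    also have "\<dots> = Q4 K f" using pos by (simp add: powr_powr)
    finally show ?thesis .
  qed
  finally show ?thesis .
qed


definition wn :: "nat \<Rightarrow> (int\<times>int\<times>int \<Rightarrow> real) \<Rightarrow> grid \<Rightarrow> real" where
  "wn K w f = (\<Sum>l\<in>MM K. w l * (cmod (dft K f l))\<^sup>2)"

lemma wn_spec: "herm K \<sigma> \<Longrightarrow> wn K w (spec K \<sigma> g) = wn K (\<lambda>l. w l * (cmod (\<sigma> l))\<^sup>2) g"
  unfolding wn_def by (intro sum.cong refl) (simp add: dft_spec norm_mult power_mult_distrib)

lemma wn_L2: "(lpnorm K 2 f)\<^sup>2 = wn K (\<lambda>_. 1) f"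
  by (simp add: lpnorm2 gsum_sq wn_def)

lemma wn_add: "wn K (\<lambda>l. w1 l + w2 l) f = wn K w1 f + wn K w2 f"
  by (simp add: wn_def sum.distrib ring_distribs)
lemma wn_cmult: "wn K (\<lambda>l. c * w l) f = c * wn K w f"
  by (simp add: wn_def sum_distrib_left mult.assoc)
lemma wn_nonneg: "(\<And>l. 0 \<le> w l) \<Longrightarrow> 0 \<le> wn K w f"
  unfolding wn_def by (intro sum_nonneg) simp
lemma wn_mono: "(\<And>l. w1 l \<le> w2 l) \<Longrightarrow> wn K w1 f \<le> wn K w2 f"
  unfolding wn_def by (intro sum_mono mult_right_mono) auto

lemma wn_grad: "(vlpnorm K 2 (grad K f))\<^sup>2 = wn K lam f"
proof -
  have "(vlpnorm K 2 (grad K f))\<^sup>2 = wn K (\<lambda>_. 1) (Dx K f) + wn K (\<lambda>_. 1) (Dy K f) + wn K (\<lambda>_. 1) (Dz K f)"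
    by (simp add: grad_def vlpnorm2 gsum_sq wn_def)
  also have "\<dots> = wn K (\<lambda>l. (2*pi*real_of_int (fst l))\<^sup>2) f + wn K (\<lambda>l. (2*pi*real_of_int (fst (snd l)))\<^sup>2) f
      + wn K (\<lambda>l. (2*pi*real_of_int (snd (snd l)))\<^sup>2) f"
    unfolding Dx_spec Dy_spec Dz_spec wn_spec[OF herm_Dx] wn_spec[OF herm_Dy] wn_spec[OF herm_Dz]
    by (simp add: norm_mult power_mult_distrib)
  also have "\<dots> = wn K lam f"
    unfolding wn_add[symmetric] by (rule arg_cong[where f="\<lambda>w. wn K w f"]) (auto simp: lam_def fun_eq_iff power_mult_distrib algebra_simps)
  finally show ?thesis .
qed

lemma wn_Lap: "wn K w (Lap K g) = wn K (\<lambda>l. w l * (lam l)\<^sup>2) g"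
  unfolding Lap_spec wn_spec[OF herm_Lap] by simp

lemma ibp:
  assumes "herm K \<sigma>" "\<forall>l\<in>MM K. cnj (\<sigma> l) = - \<sigma> l"
  shows "gsum K (\<lambda>x. spec K \<sigma> g x * f x) = - gsum K (\<lambda>x. g x * spec K \<sigma> f x)"
proof -
  have "complex_of_real (gsum K (\<lambda>x. spec K \<sigma> g x * f x)) = (\<Sum>l\<in>MM K. \<sigma> l * dft K g l * cnj (dft K f l))"
    unfolding parseval by (intro sum.cong refl) (simp add: dft_spec[OF assms(1)])
  also have "\<dots> = - (\<Sum>l\<in>MM K. dft K g l * cnj (\<sigma> l * dft K f l))"
    unfolding sum_negf[symmetric] by (intro sum.cong refl) (use assms(2) in \<open>simp\<close>)
  also have "\<dots> = - complex_of_real (gsum K (\<lambda>x. g x * spec K \<sigma> f x))"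
    unfolding parseval by (simp add: dft_spec[OF assms(1)])
  finally show ?thesis by (metis of_real_eq_iff of_real_minus)
qed

lemma ibp_Dx: "gsum K (\<lambda>x. Dx K g x * f x) = - gsum K (\<lambda>x. g x * Dx K f x)"
  unfolding Dx_spec by (rule ibp[OF herm_Dx]) simp
lemma ibp_Dy: "gsum K (\<lambda>x. Dy K g x * f x) = - gsum K (\<lambda>x. g x * Dy K f x)"
  unfolding Dy_spec by (rule ibp[OF herm_Dy]) simp
lemma ibp_Dz: "gsum K (\<lambda>x. Dz K g x * f x) = - gsum K (\<lambda>x. g x * Dz K f x)"
  unfolding Dz_spec by (rule ibp[OF herm_Dz]) simp

lemma quart_ineq:
  fixes u1 u2 u3 v1 v2 v3 :: real
  shows "(u1\<^sup>2+u2\<^sup>2+u3\<^sup>2) * (u1*(u1-v1) + u2*(u2-v2) + u3*(u3-v3))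
     \<ge> ((u1\<^sup>2+u2\<^sup>2+u3\<^sup>2)\<^sup>2 - (v1\<^sup>2+v2\<^sup>2+v3\<^sup>2)\<^sup>2) / 4"
proof -
  define S where "S = u1\<^sup>2+u2\<^sup>2+u3\<^sup>2"
  define T where "T = v1\<^sup>2+v2\<^sup>2+v3\<^sup>2"
  define d where "d = u1*v1 + u2*v2 + u3*v3"
  have S0: "S \<ge> 0" by (simp add: S_def)
  have "0 \<le> (u1-v1)\<^sup>2 + (u2-v2)\<^sup>2 + (u3-v3)\<^sup>2" by simp
  also have "\<dots> = S + T - 2*d" by (simp add: S_def T_def d_def power2_diff)
  finally have "2*d \<le> S + T" by simp
  hence a1: "S * (S - d) \<ge> S * ((S - T)/2)" using S0 by (intro mult_left_mono) auto
  have a2: "S * ((S - T)/2) \<ge> (S\<^sup>2 - T\<^sup>2)/4"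
    using zero_le_power2[of "S - T"] by (simp add: power2_eq_square field_simps)
  have eq: "u1*(u1-v1) + u2*(u2-v2) + u3*(u3-v3) = S - d"
    by (simp add: S_def d_def power2_eq_square algebra_simps)
  show ?thesis unfolding S_def[symmetric] T_def[symmetric] eq using a1 a2 by linarith
qed

lemma Dx_diff: "Dx K (\<lambda>x. f x - g x) x = Dx K f x - Dx K g x"
  unfolding Dx_spec by (rule spec_diff)
lemma Dy_diff: "Dy K (\<lambda>x. f x - g x) x = Dy K f x - Dy K g x"
  unfolding Dy_spec by (rule spec_diff)
lemma Dz_diff: "Dz K (\<lambda>x. f x - g x) x = Dz K f x - Dz K g x"
  unfolding Dz_spec by (rule spec_diff)

lemma nl_ineq:
  "gsum K (\<lambda>x. nlterm K p x * (p x - c x)) \<le> - (Q4 K p - Q4 K c) / 4"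
proof -
  define s where "s = (\<lambda>x. (Dx K p x)\<^sup>2 + (Dy K p x)\<^sup>2 + (Dz K p x)\<^sup>2)"
  define d where "d = (\<lambda>x. p x - c x)"
  have nl: "nlterm K p x = Dx K (\<lambda>x. s x * Dx K p x) x + Dy K (\<lambda>x. s x * Dy K p x) x + Dz K (\<lambda>x. s x * Dz K p x) x" for x
    by (simp add: nlterm_def dvg_def s_def Let_def)
  have "gsum K (\<lambda>x. nlterm K p x * (p x - c x)) = gsum K (\<lambda>x. nlterm K p x * d x)"
    by (simp add: d_def)
  also have "\<dots> = gsum K (\<lambda>x. Dx K (\<lambda>x. s x * Dx K p x) x * d x) + gsum K (\<lambda>x. Dy K (\<lambda>x. s x * Dy K p x) x * d x)
        + gsum K (\<lambda>x. Dz K (\<lambda>x. s x * Dz K p x) x * d x)"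
    by (simp only: nl distrib_right gsum_add)
  also have "\<dots> = - (gsum K (\<lambda>x. s x * Dx K p x * Dx K d x) + gsum K (\<lambda>x. s x * Dy K p x * Dy K d x)
        + gsum K (\<lambda>x. s x * Dz K p x * Dz K d x))"
    by (simp only: ibp_Dx ibp_Dy ibp_Dz minus_add_distrib)
  also have "\<dots> = - gsum K (\<lambda>x. s x * Dx K p x * Dx K d x + s x * Dy K p x * Dy K d x + s x * Dz K p x * Dz K d x)"
    by (simp only: gsum_add)
  also have "\<dots> = - gsum K (\<lambda>x. s x * (Dx K p x * (Dx K p x - Dx K c x) + Dy K p x * (Dy K p x - Dy K c x)
        + Dz K p x * (Dz K p x - Dz K c x)))"
  proof -
    have "s x * Dx K p x * Dx K d x + s x * Dy K p x * Dy K d x + s x * Dz K p x * Dz K d x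
       = s x * (Dx K p x * (Dx K p x - Dx K c x) + Dy K p x * (Dy K p x - Dy K c x)
        + Dz K p x * (Dz K p x - Dz K c x))" for x
      unfolding d_def Dx_diff Dy_diff Dz_diff by (simp only: distrib_left mult.assoc)
    thus ?thesis by simp
  qed
  also have "\<dots> \<le> - gsum K (\<lambda>x. (((Dx K p x)\<^sup>2 + (Dy K p x)\<^sup>2 + (Dz K p x)\<^sup>2)\<^sup>2
        - ((Dx K c x)\<^sup>2 + (Dy K c x)\<^sup>2 + (Dz K c x)\<^sup>2)\<^sup>2) / 4)"
    unfolding neg_le_iff_le s_def by (rule gsum_mono) (rule quart_ineq)
  also have "\<dots> = - (Q4 K p - Q4 K c) / 4"
  proof -
    have e: "(\<lambda>x. (((Dx K p x)\<^sup>2 + (Dy K p x)\<^sup>2 + (Dz K p x)\<^sup>2)\<^sup>2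
        - ((Dx K c x)\<^sup>2 + (Dy K c x)\<^sup>2 + (Dz K c x)\<^sup>2)\<^sup>2) / 4)
      = (\<lambda>x. (1/4) * (((Dx K p x)\<^sup>2 + (Dy K p x)\<^sup>2 + (Dz K p x)\<^sup>2)\<^sup>2
        + - (((Dx K c x)\<^sup>2 + (Dy K c x)\<^sup>2 + (Dz K c x)\<^sup>2)\<^sup>2)))"
      by (rule ext) simp
    show ?thesis unfolding e gsum_cmult gsum_add gsum_minus Q4_def by (simp add: field_simps)
  qed
  finally show ?thesis .
qed


lemma Re_mult_cnj: "Re (u * cnj v) = Re u * Re v + Im u * Im v" by simp

lemma mode_lin1:
  fixes X Y Z :: complex and L a B :: real
  assumes L: "L = 0 \<or> L \<ge> 4" and Ad: "0 \<le> B" and a: "0 \<le> a"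
  shows "Re ((of_real a * X - of_real (2*L) * (2*Y - Z) + of_real (B*L) * (X - Y) + of_real (L^2) * X) * cnj (X - Y))
     \<ge> (a/2 - L + L^2/2) * ((cmod X)\<^sup>2 - (cmod Y)\<^sup>2) + L * ((cmod (X-Y))\<^sup>2 - (cmod (Y-Z))\<^sup>2)"
proof -
  obtain x1 x2 where X: "X = Complex x1 x2" by (cases X)
  obtain y1 y2 where Y: "Y = Complex y1 y2" by (cases Y)
  obtain z1 z2 where Z: "Z = Complex z1 z2" by (cases Z)
  have L0: "L \<ge> 0" using L by auto
  have c1: "(a + L^2)/2 - L \<ge> 0"
  proof (cases "L = 0")
    case False
    hence "L \<ge> 4" using L by simp
    hence "4 * L \<le> L * L" by (intro mult_right_mono) auto
    have k: "\<And>a M L::real. 4*L \<le> M \<Longrightarrow> 0 \<le> a \<Longrightarrow> 4 \<le> L \<Longrightarrow> 0 \<le> a + M - 2*L" by linarith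
    have "0 \<le> a + L*L - 2*L" by (rule k) fact+
    thus ?thesis unfolding power2_eq_square by simp
  qed (use a in simp)
  have "Re ((of_real a * X - of_real (2*L) * (2*Y - Z) + of_real (B*L) * (X - Y) + of_real (L^2) * X) * cnj (X - Y))
     - ((a/2 - L + L^2/2) * ((cmod X)\<^sup>2 - (cmod Y)\<^sup>2) + L * ((cmod (X-Y))\<^sup>2 - (cmod (Y-Z))\<^sup>2))
     = ((a + L^2)/2 - L) * ((x1-y1)\<^sup>2 + (x2-y2)\<^sup>2) + L * ((x1 - 2*y1 + z1)\<^sup>2 + (x2 - 2*y2 + z2)\<^sup>2)
       + B * L * ((x1-y1)\<^sup>2 + (x2-y2)\<^sup>2)"
    unfolding X Y Z Re_mult_cnj cmod_power2
    by (simp add: power2_eq_square field_simps)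
  also have "\<dots> \<ge> 0" using c1 L0 Ad by (intro add_nonneg_nonneg mult_nonneg_nonneg) auto
  finally show ?thesis by simp
qed

lemma mode_lin2:
  fixes X Y Z :: complex and L e B :: real
  assumes L: "L = 0 \<or> L \<ge> 4" and Ad: "0 \<le> B" and e: "0 \<le> e" "e < 1"
  shows "Re ((- of_real e * (2*Y - Z) + of_real (B*L) * (X - Y) + of_real ((1-L)^2) * X) * cnj (X - Y))
     \<ge> (((1-L)^2 - e)/2) * ((cmod X)\<^sup>2 - (cmod Y)\<^sup>2) + e/2 * ((cmod (X-Y))\<^sup>2 - (cmod (Y-Z))\<^sup>2)"
proof -
  obtain x1 x2 where X: "X = Complex x1 x2" by (cases X)
  obtain y1 y2 where Y: "Y = Complex y1 y2" by (cases Y)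
  obtain z1 z2 where Z: "Z = Complex z1 z2" by (cases Z)
  have L0: "L \<ge> 0" using L by auto
  have c1: "((1-L)^2 - e)/2 \<ge> 0"
  proof -
    have "(1-L)^2 \<ge> 1" using L
    proof
      assume "L \<ge> 4" hence "1 \<le> L - 1" by simp
      hence "1 \<le> (L-1)^2" by (simp add: one_le_power)
      thus ?thesis by (simp add: power2_commute)
    qed simp
    thus ?thesis using e by simp
  qed
  have "Re ((- of_real e * (2*Y - Z) + of_real (B*L) * (X - Y) + of_real ((1-L)^2) * X) * cnj (X - Y))
     - ((((1-L)^2 - e)/2) * ((cmod X)\<^sup>2 - (cmod Y)\<^sup>2) + e/2 * ((cmod (X-Y))\<^sup>2 - (cmod (Y-Z))\<^sup>2))
     = (((1-L)^2 - e)/2) * ((x1-y1)\<^sup>2 + (x2-y2)\<^sup>2) + e/2 * ((x1 - 2*y1 + z1)\<^sup>2 + (x2 - 2*y2 + z2)\<^sup>2)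
       + B * L * ((x1-y1)\<^sup>2 + (x2-y2)\<^sup>2)"
    unfolding X Y Z Re_mult_cnj cmod_power2
    by (simp add: power2_eq_square field_simps)
  also have "\<dots> \<ge> 0" using c1 L0 Ad e by (intro add_nonneg_nonneg mult_nonneg_nonneg) auto
  finally show ?thesis by simp
qed

lemma mode_scheme:
  fixes D1 D0 U :: complex and L dt :: real
  assumes dt: "dt > 0" and L: "L \<ge> 0"
    and sch: "(3/2*D1 - 1/2*D0) / of_real dt = of_real (-L) * U"
    and z: "L = 0 \<Longrightarrow> D0 = 0"
  shows "Re (U * cnj D1) \<le> - (5/4*(cmod D1)\<^sup>2 - 1/4*(cmod D0)\<^sup>2) / (dt*L)"
    and "L = 0 \<Longrightarrow> D1 = 0"
proof -
  show D1z: "D1 = 0" if "L = 0"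
  proof -
    have "(3/2*D1 - 1/2*D0) / of_real dt = 0" using sch that by simp
    hence "3/2*D1 - 1/2*D0 = 0" using dt by simp
    thus ?thesis using z[OF that] by simp
  qed
  show "Re (U * cnj D1) \<le> - (5/4*(cmod D1)\<^sup>2 - 1/4*(cmod D0)\<^sup>2) / (dt*L)"
  proof (cases "L = 0")
    case True thus ?thesis using D1z by simp
  next
    case False
    hence Lp: "L > 0" using L by simp
    have U: "U = - (3/2*D1 - 1/2*D0) / of_real (dt*L)"
      using sch Lp dt by (simp add: field_simps)
    have "Re (U * cnj D1) = Re (- (3/2*D1 - 1/2*D0) * cnj D1) / (dt*L)"
      unfolding U by (simp add: Re_divide_of_real)
    also have "\<dots> \<le> - (5/4*(cmod D1)\<^sup>2 - 1/4*(cmod D0)\<^sup>2) / (dt*L)"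
    proof (rule divide_right_mono)
      obtain a b where D1: "D1 = Complex a b" by (cases D1)
      obtain c d where D0: "D0 = Complex c d" by (cases D0)
      have k: "\<And>P Q R::real. 0 \<le> P + Q - 2*R \<Longrightarrow> -(3/2)*P + 1/2*R \<le> -(5/4*P - 1/4*Q)" by linarith
      have e1: "Re (- (3/2*D1 - 1/2*D0) * cnj D1) = -(3/2)*(a*a+b*b) + 1/2*(a*c+b*d)"
        by (simp add: D1 D0 algebra_simps)
      have e2: "(cmod D1)\<^sup>2 = a*a+b*b" unfolding D1 cmod_power2 by (simp add: power2_eq_square)
      have e3: "(cmod D0)\<^sup>2 = c*c+d*d" unfolding D0 cmod_power2 by (simp add: power2_eq_square)
      have "0 \<le> (a-c)*(a-c) + (b-d)*(b-d)" by simp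
      also have "(a-c)*(a-c) + (b-d)*(b-d) = a*a + c*c - 2*(a*c) + b*b + d*d - 2*(b*d)"
        by (simp add: algebra_simps)
      also have "\<dots> = (a*a+b*b) + (c*c+d*d) - 2*(a*c+b*d)" by simp
      finally have "0 \<le> (a*a+b*b) + (c*c+d*d) - 2*(a*c+b*d)" .
      thus "Re (- (3/2*D1 - 1/2*D0) * cnj D1) \<le> - (5/4*(cmod D1)\<^sup>2 - 1/4*(cmod D0)\<^sup>2)"
        unfolding e1 e2 e3 by (rule k)
      show "0 \<le> dt * L" using dt Lp by simp
    qed
    finally show ?thesis .
  qed
qed


lemma dft_mu1:
  assumes l: "l \<in> MM K"
  shows "dft K (mu1 K a A dt p c q) l = - dft K (nlterm K p) l +
    (of_real a * dft K p l - of_real (2 * lam l) * (2 * dft K c l - dft K q l)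
     + of_real (A*dt * lam l) * (dft K p l - dft K c l) + of_real ((lam l)^2) * dft K p l)"
  unfolding mu1_def
  apply (simp only: dft_add dft_diff dft_uminus dft_cmult dft_Lap[OF l])
  apply (simp add: algebra_simps power2_eq_square)
  done

lemma dft_IdLap: "l \<in> MM K \<Longrightarrow> dft K (IdLap K f) l = of_real (1 - lam l) * dft K f l"
  unfolding IdLap_def by (simp only: dft_add dft_Lap) (simp add: algebra_simps)

lemma dft_mu2:
  assumes l: "l \<in> MM K"
  shows "dft K (mu2 K e A dt p c q) l = - dft K (nlterm K p) l +
    (- of_real e * (2 * dft K c l - dft K q l)
     + of_real (A*dt * lam l) * (dft K p l - dft K c l) + of_real ((1 - lam l)^2) * dft K p l)"
  unfolding mu2_def
  apply (simp only: dft_add dft_diff dft_uminus dft_cmult dft_Lap[OF l] dft_IdLap[OF l])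
  apply (simp add: algebra_simps power2_eq_square)
  done

lemma dft_scheme_lhs:
  "dft K (\<lambda>x. (3/2 * p x - 2 * c x + 1/2 * q x) / dt) l
    = (3/2 * (dft K p l - dft K c l) - 1/2 * (dft K c l - dft K q l)) / of_real dt"
  by (simp only: dft_div dft_add dft_diff dft_cmult) (simp add: algebra_simps)

lemma lam_zero_iff: "lam l = 0 \<longleftrightarrow> l = (0,0,0)"
proof
  assume "lam l = 0"
  hence "(real_of_int (fst l))\<^sup>2 + (real_of_int (fst (snd l)))\<^sup>2 + (real_of_int (snd (snd l)))\<^sup>2 = 0"
    unfolding lam_def by simp
  hence "real_of_int (fst l) = 0 \<and> real_of_int (fst (snd l)) = 0 \<and> real_of_int (snd (snd l)) = 0"
    by (smt (verit) zero_le_power2 zero_eq_power2)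
  hence "fst l = 0 \<and> fst (snd l) = 0 \<and> snd (snd l) = 0" by simp
  thus "l = (0,0,0)" by (cases l) auto
qed (simp add: lam_def)

lemma energy_F: "energy K a f = Q4 K f / 4 + wn K (\<lambda>l. a/2 - lam l + (lam l)^2/2) f"
proof -
  have "energy K a f = Q4 K f / 4 + (a/2 * wn K (\<lambda>_. 1) f - wn K lam f + 1/2 * wn K (\<lambda>l. 1 * (lam l)^2) f)"
    unfolding energy_def vlpnorm4 wn_L2 wn_grad wn_Lap by simp
  also have "a/2 * wn K (\<lambda>_. 1) f - wn K lam f + 1/2 * wn K (\<lambda>l. 1 * (lam l)^2) f
     = wn K (\<lambda>l. a/2 - lam l + (lam l)^2/2) f"
    unfolding wn_def by (simp add: sum_distrib_left sum_subtractf[symmetric] sum.distrib[symmetric] algebra_simps)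
  finally show ?thesis .
qed

lemma H2_F: "(H2norm K f)\<^sup>2 = wn K (\<lambda>l. 1 + lam l + (lam l)^2) f"
proof -
  have "(H2norm K f)\<^sup>2 = wn K (\<lambda>_. 1) f + wn K lam f + wn K (\<lambda>l. 1 * (lam l)^2) f"
    unfolding H2norm_def wn_L2 wn_grad wn_Lap
    by (simp add: wn_nonneg lam_nonneg add_nonneg_nonneg)
  also have "\<dots> = wn K (\<lambda>l. 1 + lam l + (lam l)^2) f"
    unfolding wn_def by (simp add: sum.distrib[symmetric] algebra_simps)
  finally show ?thesis .
qed


definition wt :: "nat \<Rightarrow> real \<Rightarrow> int\<times>int\<times>int \<Rightarrow> real" where
  "wt i e = (if i = 1 then lam else (\<lambda>_. e/2))"

definition Et :: "nat \<Rightarrow> real \<Rightarrow> nat \<Rightarrow> real \<Rightarrow> grid \<Rightarrow> grid \<Rightarrow> real" where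
  "Et i e K dt p c = energy K (1-e) p + wn K (\<lambda>l. 1 / lam l) (\<lambda>x. p x - c x) / (4*dt)
      + wn K (wt i e) (\<lambda>x. p x - c x)"

lemma sum_div_lam:
  fixes u v :: "int\<times>int\<times>int \<Rightarrow> real"
  assumes dt: "dt > 0"
  shows "(\<Sum>l\<in>S. - (5/4 * u l - 1/4 * v l) / (dt * lam l))
    = - (5/4) * ((\<Sum>l\<in>S. 1 / lam l * u l) / dt) + 1/4 * ((\<Sum>l\<in>S. 1 / lam l * v l) / dt)"
proof -
  have "(\<Sum>l\<in>S. - (5/4 * u l - 1/4 * v l) / (dt * lam l))
     = (\<Sum>l\<in>S. - (5/4) * (1 / lam l * u l / dt) + 1/4 * (1 / lam l * v l / dt))"
  proof (rule sum.cong[OF refl])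
    fix l
    show "- (5/4 * u l - 1/4 * v l) / (dt * lam l) = - (5/4) * (1 / lam l * u l / dt) + 1/4 * (1 / lam l * v l / dt)"
      by (cases "lam l = 0") (use dt in \<open>simp_all add: field_simps\<close>)
  qed
  also have "\<dots> = - (5/4) * ((\<Sum>l\<in>S. 1 / lam l * u l) / dt) + 1/4 * ((\<Sum>l\<in>S. 1 / lam l * v l) / dt)"
    by (simp only: sum.distrib sum_distrib_left[symmetric] sum_divide_distrib[symmetric])
  finally show ?thesis .
qed

lemma step:
  assumes dt: "dt > 0" and A: "A \<ge> 0" and e: "0 < e" "e < 1" and i: "i = 1 \<or> i = 2"
    and sch: "\<forall>x. (3/2 * p x - 2 * c x + 1/2 * q x) / dt
       = Lap K (if i = 1 then mu1 K (1-e) A dt p c q else mu2 K e A dt p c q) x"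
    and z: "dft K (\<lambda>x. c x - q x) (0,0,0) = 0"
  shows "dft K (\<lambda>x. p x - c x) (0,0,0) = 0 \<and> Et i e K dt p c \<le> Et i e K dt c q"
proof -
  define mu where "mu = (if i = 1 then mu1 K (1-e) A dt p c q else mu2 K e A dt p c q)"
  define X where "X = dft K p"
  define Y where "Y = dft K c"
  define Z where "Z = dft K q"
  define U where "U = dft K mu"
  define N where "N = dft K (nlterm K p)"
  define D1 where "D1 = dft K (\<lambda>x. p x - c x)"
  define D0 where "D0 = dft K (\<lambda>x. c x - q x)"
  define lin where "lin = (\<lambda>l. if i = 1 then (of_real (1-e) * X l - of_real (2 * lam l) * (2 * Y l - Z l)
     + of_real (A*dt * lam l) * (X l - Y l) + of_real ((lam l)^2) * X l)
     else (- of_real e * (2 * Y l - Z l) + of_real (A*dt * lam l) * (X l - Y l) + of_real ((1 - lam l)^2) * X l))"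
  define qf where "qf = (\<lambda>l. (1-e)/2 - lam l + (lam l)^2/2)"
  define H1 where "H1 = wn K (\<lambda>l. 1 / lam l) (\<lambda>x. p x - c x)"
  define H0 where "H0 = wn K (\<lambda>l. 1 / lam l) (\<lambda>x. c x - q x)"
  have D1X: "D1 l = X l - Y l" for l by (simp add: D1_def X_def Y_def dft_diff)
  have D0Y: "D0 l = Y l - Z l" for l by (simp add: D0_def Z_def Y_def dft_diff)
  have UN: "U l = - N l + lin l" if l: "l \<in> MM K" for l
    using dft_mu1[OF l, of "1-e" A dt p c q] dft_mu2[OF l, of e A dt p c q]
    by (simp add: U_def mu_def N_def lin_def X_def Y_def Z_def)
  have F1: "(3/2 * D1 l - 1/2 * D0 l) / of_real dt = of_real (- lam l) * U l" if l: "l \<in> MM K" for l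
  proof -
    have "(\<lambda>x. (3/2 * p x - 2 * c x + 1/2 * q x) / dt) = Lap K mu"
      using sch by (auto simp: mu_def)
    hence "dft K (\<lambda>x. (3/2 * p x - 2 * c x + 1/2 * q x) / dt) l = dft K (Lap K mu) l" by simp
    thus ?thesis unfolding dft_scheme_lhs dft_Lap[OF l] D1X D0Y U_def X_def Y_def Z_def .
  qed
  have z0: "D0 l = 0" if "l \<in> MM K" "lam l = 0" for l
    using that z lam_zero_iff[of l] by (simp add: D0_def)
  have M1: "Re (U l * cnj (D1 l)) \<le> - (5/4*(cmod (D1 l))\<^sup>2 - 1/4*(cmod (D0 l))\<^sup>2) / (dt * lam l)"
    if l: "l \<in> MM K" for l
    by (rule mode_scheme(1)[OF dt lam_nonneg F1[OF l] z0[OF l]])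
  have M0: "D1 (0,0,0) = 0"
    by (rule mode_scheme(2)[OF dt lam_nonneg F1[OF zero_MM] z0[OF zero_MM]]) (rule lam_zero, rule refl)+
  have M2: "Re (lin l * cnj (D1 l)) \<ge> qf l * ((cmod (X l))\<^sup>2 - (cmod (Y l))\<^sup>2)
      + wt i e l * ((cmod (D1 l))\<^sup>2 - (cmod (D0 l))\<^sup>2)" if l: "l \<in> MM K" for l
  proof (cases "i = 1")
    case True
    have "0 \<le> A * dt" using A dt by simp
    from mode_lin1[OF lam_cases[of l] this, of "1-e" "X l" "Y l" "Z l"] e True show ?thesis
      by (simp add: lin_def qf_def wt_def D1X D0Y)
  next
    case False
    have "0 \<le> A * dt" using A dt by simp
    from mode_lin2[OF lam_cases[of l] this, of e "X l" "Y l" "Z l"] e False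
    have "Re (lin l * cnj (D1 l)) \<ge> (((1 - lam l)^2 - e)/2) * ((cmod (X l))\<^sup>2 - (cmod (Y l))\<^sup>2)
      + wt i e l * ((cmod (D1 l))\<^sup>2 - (cmod (D0 l))\<^sup>2)"
      by (simp add: lin_def wt_def D1X D0Y)
    moreover have "((1 - lam l)^2 - e)/2 = qf l" by (simp add: qf_def power2_eq_square field_simps)
    ultimately show ?thesis by simp
  qed
  have S1: "(\<Sum>l\<in>MM K. Re (U l * cnj (D1 l))) \<le> - (5/4) * (H1 / dt) + 1/4 * (H0 / dt)"
  proof -
    have "(\<Sum>l\<in>MM K. Re (U l * cnj (D1 l))) \<le> (\<Sum>l\<in>MM K. - (5/4*(cmod (D1 l))\<^sup>2 - 1/4*(cmod (D0 l))\<^sup>2) / (dt * lam l))"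
      by (rule sum_mono) (rule M1)
    also have "\<dots> = - (5/4) * (H1 / dt) + 1/4 * (H0 / dt)"
      unfolding sum_div_lam[OF dt] H1_def H0_def wn_def D1_def D0_def ..
    finally show ?thesis .
  qed
  have S2: "(\<Sum>l\<in>MM K. Re (U l * cnj (D1 l))) = - gsum K (\<lambda>x. nlterm K p x * (p x - c x)) + (\<Sum>l\<in>MM K. Re (lin l * cnj (D1 l)))"
  proof -
    have "(\<Sum>l\<in>MM K. Re (U l * cnj (D1 l))) = (\<Sum>l\<in>MM K. - Re (N l * cnj (D1 l)) + Re (lin l * cnj (D1 l)))"
      by (intro sum.cong refl) (simp add: UN ring_distribs)
    also have "\<dots> = - Re (\<Sum>l\<in>MM K. N l * cnj (D1 l)) + (\<Sum>l\<in>MM K. Re (lin l * cnj (D1 l)))"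
      by (simp only: sum.distrib sum_negf Re_sum)
    also have "(\<Sum>l\<in>MM K. N l * cnj (D1 l)) = of_real (gsum K (\<lambda>x. nlterm K p x * (p x - c x)))"
      unfolding parseval N_def D1_def ..
    finally show ?thesis by simp
  qed
  have S3: "(\<Sum>l\<in>MM K. Re (lin l * cnj (D1 l))) \<ge> wn K qf p - wn K qf c
      + wn K (wt i e) (\<lambda>x. p x - c x) - wn K (wt i e) (\<lambda>x. c x - q x)"
  proof -
    have "wn K qf p - wn K qf c + wn K (wt i e) (\<lambda>x. p x - c x) - wn K (wt i e) (\<lambda>x. c x - q x)
       = (\<Sum>l\<in>MM K. qf l * ((cmod (X l))\<^sup>2 - (cmod (Y l))\<^sup>2) + wt i e l * ((cmod (D1 l))\<^sup>2 - (cmod (D0 l))\<^sup>2))"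
      unfolding wn_def X_def Y_def D1_def D0_def
      by (simp add: sum.distrib sum_subtractf ring_distribs)
    also have "\<dots> \<le> (\<Sum>l\<in>MM K. Re (lin l * cnj (D1 l)))"
      by (rule sum_mono) (rule M2)
    finally show ?thesis .
  qed
  have NL0: "gsum K (\<lambda>x. nlterm K p x * (p x - c x)) \<le> - (Q4 K p - Q4 K c) / 4" by (rule nl_ineq)
  have "- (Q4 K p - Q4 K c) / 4 = Q4 K c / 4 - Q4 K p / 4" by (simp add: field_simps)
  hence NL: "gsum K (\<lambda>x. nlterm K p x * (p x - c x)) \<le> Q4 K c / 4 - Q4 K p / 4" using NL0 by simp
  have Ep: "energy K (1-e) p = Q4 K p / 4 + wn K qf p" unfolding energy_F qf_def ..
  have Ec: "energy K (1-e) c = Q4 K c / 4 + wn K qf c" unfolding energy_F qf_def ..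
  have "0 \<le> H1" unfolding H1_def by (rule wn_nonneg) (simp add: lam_nonneg)
  hence H1nn: "0 \<le> H1 / dt" using dt by simp
  have e1: "H1 / (4*dt) = 1/4 * (H1 / dt)" "H0 / (4*dt) = 1/4 * (H0 / dt)" by simp_all
  have "Et i e K dt p c \<le> Et i e K dt c q"
    unfolding Et_def Ep Ec H1_def[symmetric] H0_def[symmetric] e1
    using S1 S2 S3 NL H1nn by linarith
  moreover have "dft K (\<lambda>x. p x - c x) (0,0,0) = 0" using M0 by (simp add: D1_def)
  ultimately show ?thesis by simp
qed


lemma wn_scale: "wn K w (\<lambda>x. c * f x) = c^2 * wn K w f"
  unfolding wn_def dft_cmult by (simp add: norm_mult power_mult_distrib sum_distrib_left mult_ac)

lemma wn_cong: "(\<And>l. w1 l = w2 l) \<Longrightarrow> wn K w1 f = wn K w2 f"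
  unfolding wn_def by simp

lemma mode_coercive:
  fixes a L :: real
  assumes a: "0 < a" "a < 1" and L: "L = 0 \<or> L \<ge> 4"
  shows "a/8 * (1 + L + L^2) \<le> a/2 - L + L^2/2"
proof (cases "L = 0")
  case True thus ?thesis using a by simp
next
  case False
  hence L4: "L \<ge> 4" using L by simp
  have f1: "a * L \<le> L" using a L4 by (simp add: mult_le_cancel_right1)
  have f2: "a * (L*L) \<le> L*L" using a L4 by (simp add: mult_le_cancel_right1)
  have f3: "4 * L \<le> L * L" using L4 by (intro mult_right_mono) auto
  have k: "\<And>a L M aL aM :: real. aL \<le> L \<Longrightarrow> aM \<le> M \<Longrightarrow> 4 * L \<le> M \<Longrightarrow> 0 < a \<Longrightarrow> 4 \<le> L \<Longrightarrow>
     0 \<le> 3*a + 4*M - aM - 8*L - aL" by linarith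
  have "0 \<le> 3*a + 4*(L*L) - a*(L*L) - 8*L - a*L" by (rule k[OF f1 f2 f3 a(1) L4])
  thus ?thesis by (simp add: power2_eq_square field_simps)
qed

lemma energy_lower:
  assumes a: "0 < a" "a < 1"
  shows "a/8 * (H2norm K f)\<^sup>2 \<le> energy K a f"
proof -
  have "a/8 * (H2norm K f)\<^sup>2 = wn K (\<lambda>l. a/8 * (1 + lam l + (lam l)^2)) f"
    unfolding H2_F wn_cmult ..
  also have "\<dots> \<le> wn K (\<lambda>l. a/2 - lam l + (lam l)^2/2) f"
    by (rule wn_mono) (rule mode_coercive[OF a lam_cases])
  also have "\<dots> \<le> energy K a f"
  proof -
    have "0 \<le> Q4 K f" unfolding Q4_def by (rule gsum_nonneg) simp
    thus ?thesis unfolding energy_F by simp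
  qed
  finally show ?thesis .
qed

lemma Et_lower:
  assumes dt: "dt > 0" and e: "0 < e" "e < 1"
  shows "energy K (1-e) p \<le> Et i e K dt p c"
proof -
  have "0 \<le> wn K (\<lambda>l. 1 / lam l) (\<lambda>x. p x - c x)" by (rule wn_nonneg) (simp add: lam_nonneg)
  moreover have "0 \<le> wn K (wt i e) (\<lambda>x. p x - c x)"
    by (rule wn_nonneg) (use e in \<open>auto simp: wt_def lam_nonneg\<close>)
  ultimately show ?thesis unfolding Et_def using dt by simp
qed

lemma Et_init:
  assumes dt: "dt > 0" and i: "i = 1 \<or> i = 2"
    and r: "r = (\<lambda>x. p x - dt * Lap K M x)"
  shows "Et i e K dt p r = energy K (1 - e) p + dt / 4 * (vlpnorm K 2 (grad K M))\<^sup>2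
     + (if i = 1 then dt\<^sup>2 * (vlpnorm K 2 (grad K (Lap K M)))\<^sup>2
        else e * dt\<^sup>2 / 2 * (lpnorm K 2 (Lap K M))\<^sup>2)"
proof -
  have d: "(\<lambda>x. p x - r x) = (\<lambda>x. dt * Lap K M x)" by (simp add: r)
  have H: "wn K (\<lambda>l. 1 / lam l) (\<lambda>x. p x - r x) / (4*dt) = dt / 4 * (vlpnorm K 2 (grad K M))\<^sup>2"
  proof -
    have "wn K (\<lambda>l. 1 / lam l) (\<lambda>x. p x - r x) = dt^2 * wn K (\<lambda>l. 1 / lam l * (lam l)^2) M"
      unfolding d wn_scale wn_Lap ..
    also have "wn K (\<lambda>l. 1 / lam l * (lam l)^2) M = wn K lam M"
      by (rule wn_cong) (simp add: power2_eq_square)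
    finally show ?thesis using dt unfolding wn_grad by (simp add: power2_eq_square)
  qed
  have W: "wn K (wt i e) (\<lambda>x. p x - r x) = (if i = 1 then dt\<^sup>2 * (vlpnorm K 2 (grad K (Lap K M)))\<^sup>2
        else e * dt\<^sup>2 / 2 * (lpnorm K 2 (Lap K M))\<^sup>2)"
  proof (cases "i = 1")
    case True
    thus ?thesis unfolding d wn_scale wn_grad wn_Lap by (simp add: wt_def)
  next
    case False
    have "wn K (\<lambda>_. e/2) (Lap K M) = e/2 * wn K (\<lambda>_. 1) (Lap K M)"
      using wn_cmult[of K "e/2" "\<lambda>_. 1" "Lap K M"] by simp
    thus ?thesis using False unfolding d wn_scale wn_L2 by (simp add: wt_def)
  qed
  show ?thesis unfolding Et_def H W ..
qed

theorem corollary3p1: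
  fixes \<epsilon> A :: real and i :: nat
  assumes "0 < \<epsilon>" and "\<epsilon> < 1"
    and "A \<ge> \<epsilon>\<^sup>2 / 16"
    and "i = 1 \<or> i = 2"
  shows "\<forall>C0::real. \<exists>C1>0. \<forall>(K::nat) (dt::real) (\<phi>::int \<Rightarrow> grid).
    (dt > 0
     \<and> (\<forall>m\<ge>0. gridfun K (\<phi> m))
     \<and> \<phi> (-1) = (\<lambda>x. \<phi> 0 x - dt * Lap K (mu0 K (1 - \<epsilon>) (\<phi> 0)) x)
     \<and> (\<forall>k\<ge>0. \<forall>x. (3/2 * \<phi> (k+1) x - 2 * \<phi> k x + 1/2 * \<phi> (k-1) x) / dt
            = Lap K (if i = 1 then mu1 K (1 - \<epsilon>) A dt (\<phi> (k+1)) (\<phi> k) (\<phi> (k-1))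
                               else mu2 K \<epsilon> A dt (\<phi> (k+1)) (\<phi> k) (\<phi> (k-1))) x)
     \<and> (if i = 1 then
          energy K (1 - \<epsilon>) (\<phi> 0) + dt / 4 * (vlpnorm K 2 (grad K (mu0 K (1 - \<epsilon>) (\<phi> 0))))\<^sup>2
            + dt\<^sup>2 * (vlpnorm K 2 (grad K (Lap K (mu0 K (1 - \<epsilon>) (\<phi> 0)))))\<^sup>2 \<le> C0
        else
          energy K (1 - \<epsilon>) (\<phi> 0) + dt / 4 * (vlpnorm K 2 (grad K (mu0 K (1 - \<epsilon>) (\<phi> 0))))\<^sup>2
            + \<epsilon> * dt\<^sup>2 / 2 * (lpnorm K 2 (Lap K (mu0 K (1 - \<epsilon>) (\<phi> 0))))\<^sup>2 \<le> C0))
    \<longrightarrow> (\<forall>m\<ge>1. H2norm K (\<phi> m) \<le> C1)"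
proof (intro allI)
  fix C0 :: real
  have e: "0 < \<epsilon>" "\<epsilon> < 1" using assms by auto
  have "\<epsilon>\<^sup>2 / 16 \<ge> 0" by simp
  hence A0: "A \<ge> 0" using assms(3) by linarith
  have i: "i = 1 \<or> i = 2" by fact
  define a where "a = 1 - \<epsilon>"
  have a: "0 < a" "a < 1" using e by (auto simp: a_def)
  define C1 where "C1 = sqrt (8 * \<bar>C0\<bar> / a) + 1"
  have "0 \<le> sqrt (8 * \<bar>C0\<bar> / a)" using a by simp
  hence C1pos: "C1 > 0" unfolding C1_def by linarith
  show "\<exists>C1>0. \<forall>(K::nat) (dt::real) (\<phi>::int \<Rightarrow> grid).
    (dt > 0
     \<and> (\<forall>m\<ge>0. gridfun K (\<phi> m))
     \<and> \<phi> (-1) = (\<lambda>x. \<phi> 0 x - dt * Lap K (mu0 K (1 - \<epsilon>) (\<phi> 0)) x)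
     \<and> (\<forall>k\<ge>0. \<forall>x. (3/2 * \<phi> (k+1) x - 2 * \<phi> k x + 1/2 * \<phi> (k-1) x) / dt
            = Lap K (if i = 1 then mu1 K (1 - \<epsilon>) A dt (\<phi> (k+1)) (\<phi> k) (\<phi> (k-1))
                               else mu2 K \<epsilon> A dt (\<phi> (k+1)) (\<phi> k) (\<phi> (k-1))) x)
     \<and> (if i = 1 then
          energy K (1 - \<epsilon>) (\<phi> 0) + dt / 4 * (vlpnorm K 2 (grad K (mu0 K (1 - \<epsilon>) (\<phi> 0))))\<^sup>2
            + dt\<^sup>2 * (vlpnorm K 2 (grad K (Lap K (mu0 K (1 - \<epsilon>) (\<phi> 0)))))\<^sup>2 \<le> C0
        else
          energy K (1 - \<epsilon>) (\<phi> 0) + dt / 4 * (vlpnorm K 2 (grad K (mu0 K (1 - \<epsilon>) (\<phi> 0))))\<^sup>2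
            + \<epsilon> * dt\<^sup>2 / 2 * (lpnorm K 2 (Lap K (mu0 K (1 - \<epsilon>) (\<phi> 0))))\<^sup>2 \<le> C0))
    \<longrightarrow> (\<forall>m\<ge>1. H2norm K (\<phi> m) \<le> C1)"
  proof (intro exI[of _ C1] conjI allI impI C1pos)
    fix K :: nat and dt :: real and \<phi> :: "int \<Rightarrow> grid" and m :: int
    assume H: "dt > 0
     \<and> (\<forall>m\<ge>0. gridfun K (\<phi> m))
     \<and> \<phi> (-1) = (\<lambda>x. \<phi> 0 x - dt * Lap K (mu0 K (1 - \<epsilon>) (\<phi> 0)) x)
     \<and> (\<forall>k\<ge>0. \<forall>x. (3/2 * \<phi> (k+1) x - 2 * \<phi> k x + 1/2 * \<phi> (k-1) x) / dt
            = Lap K (if i = 1 then mu1 K (1 - \<epsilon>) A dt (\<phi> (k+1)) (\<phi> k) (\<phi> (k-1))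
                               else mu2 K \<epsilon> A dt (\<phi> (k+1)) (\<phi> k) (\<phi> (k-1))) x)
     \<and> (if i = 1 then
          energy K (1 - \<epsilon>) (\<phi> 0) + dt / 4 * (vlpnorm K 2 (grad K (mu0 K (1 - \<epsilon>) (\<phi> 0))))\<^sup>2
            + dt\<^sup>2 * (vlpnorm K 2 (grad K (Lap K (mu0 K (1 - \<epsilon>) (\<phi> 0)))))\<^sup>2 \<le> C0
        else
          energy K (1 - \<epsilon>) (\<phi> 0) + dt / 4 * (vlpnorm K 2 (grad K (mu0 K (1 - \<epsilon>) (\<phi> 0))))\<^sup>2
            + \<epsilon> * dt\<^sup>2 / 2 * (lpnorm K 2 (Lap K (mu0 K (1 - \<epsilon>) (\<phi> 0))))\<^sup>2 \<le> C0)"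
      and m: "1 \<le> m"
    note HH = H[THEN conjunct2, THEN conjunct2]
    from H have dt: "dt > 0" by (rule conjunct1)
    have phim1: "\<phi> (-1) = (\<lambda>x. \<phi> 0 x - dt * Lap K (mu0 K (1 - \<epsilon>) (\<phi> 0)) x)" by (rule HH[THEN conjunct1])
    have sch: "\<forall>k\<ge>0. \<forall>x. (3/2 * \<phi> (k+1) x - 2 * \<phi> k x + 1/2 * \<phi> (k-1) x) / dt
            = Lap K (if i = 1 then mu1 K (1 - \<epsilon>) A dt (\<phi> (k+1)) (\<phi> k) (\<phi> (k-1))
                               else mu2 K \<epsilon> A dt (\<phi> (k+1)) (\<phi> k) (\<phi> (k-1))) x" by (rule HH[THEN conjunct2, THEN conjunct1])
    have init: "(if i = 1 then
          energy K (1 - \<epsilon>) (\<phi> 0) + dt / 4 * (vlpnorm K 2 (grad K (mu0 K (1 - \<epsilon>) (\<phi> 0))))\<^sup>2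
            + dt\<^sup>2 * (vlpnorm K 2 (grad K (Lap K (mu0 K (1 - \<epsilon>) (\<phi> 0)))))\<^sup>2 \<le> C0
        else
          energy K (1 - \<epsilon>) (\<phi> 0) + dt / 4 * (vlpnorm K 2 (grad K (mu0 K (1 - \<epsilon>) (\<phi> 0))))\<^sup>2
            + \<epsilon> * dt\<^sup>2 / 2 * (lpnorm K 2 (Lap K (mu0 K (1 - \<epsilon>) (\<phi> 0))))\<^sup>2 \<le> C0)" by (rule HH[THEN conjunct2, THEN conjunct2])
    define E where "E = (\<lambda>n::nat. Et i \<epsilon> K dt (\<phi> (int n)) (\<phi> (int n - 1)))"
    have E0: "E 0 \<le> C0"
    proof -
      have "E 0 = energy K (1 - \<epsilon>) (\<phi> 0) + dt / 4 * (vlpnorm K 2 (grad K (mu0 K (1 - \<epsilon>) (\<phi> 0))))\<^sup>2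
         + (if i = 1 then dt\<^sup>2 * (vlpnorm K 2 (grad K (Lap K (mu0 K (1 - \<epsilon>) (\<phi> 0)))))\<^sup>2
        else \<epsilon> * dt\<^sup>2 / 2 * (lpnorm K 2 (Lap K (mu0 K (1 - \<epsilon>) (\<phi> 0))))\<^sup>2)"
        unfolding E_def by (simp add: Et_init[OF dt i phim1])
      thus ?thesis using init by (cases "i = 1") auto
    qed
    have z0: "dft K (\<lambda>x. \<phi> (int 0) x - \<phi> (int 0 - 1) x) (0,0,0) = 0"
    proof -
      have "(\<lambda>x. \<phi> (int 0) x - \<phi> (int 0 - 1) x) = (\<lambda>x. dt * Lap K (mu0 K (1 - \<epsilon>) (\<phi> 0)) x)"
        by (simp add: phim1)
      thus ?thesis by (simp add: dft_cmult dft_Lap[OF zero_MM] lam_zero)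
    qed
    have ind: "dft K (\<lambda>x. \<phi> (int n) x - \<phi> (int n - 1) x) (0,0,0) = 0 \<and> E n \<le> E 0" for n
    proof (induction n)
      case 0 thus ?case using z0 by simp
    next
      case (Suc n)
      have sch_n: "\<forall>x. (3/2 * \<phi> (int n + 1) x - 2 * \<phi> (int n) x + 1/2 * \<phi> (int n - 1) x) / dt
            = Lap K (if i = 1 then mu1 K (1 - \<epsilon>) A dt (\<phi> (int n + 1)) (\<phi> (int n)) (\<phi> (int n - 1))
                               else mu2 K \<epsilon> A dt (\<phi> (int n + 1)) (\<phi> (int n)) (\<phi> (int n - 1))) x"
        by (rule allI, rule sch[rule_format]) simp
      have st: "dft K (\<lambda>x. \<phi> (int n + 1) x - \<phi> (int n) x) (0,0,0) = 0
          \<and> Et i \<epsilon> K dt (\<phi> (int n + 1)) (\<phi> (int n)) \<le> Et i \<epsilon> K dt (\<phi> (int n)) (\<phi> (int n - 1))"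
        by (rule step[OF dt A0 e i sch_n]) (use Suc.IH in blast)
      have eq: "int (Suc n) = int n + 1" "int n + 1 - 1 = int n" by simp_all
      have "E (Suc n) = Et i \<epsilon> K dt (\<phi> (int n + 1)) (\<phi> (int n))" unfolding E_def eq ..
      moreover have "E n = Et i \<epsilon> K dt (\<phi> (int n)) (\<phi> (int n - 1))" unfolding E_def ..
      ultimately show ?case unfolding eq using st Suc.IH by linarith
    qed
    define n where "n = nat m"
    have n: "m = int n" using m by (simp add: n_def)
    have "energy K a (\<phi> m) \<le> E n" unfolding E_def n a_def by (rule Et_lower[OF dt e])
    also have "\<dots> \<le> E 0" using ind by blast
    also have "\<dots> \<le> C0" by (rule E0)
    finally have "a/8 * (H2norm K (\<phi> m))\<^sup>2 \<le> C0" using energy_lower[OF a, of K "\<phi> m"] by linarith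
    hence "(H2norm K (\<phi> m))\<^sup>2 \<le> 8 * \<bar>C0\<bar> / a" using a by (simp add: field_simps)
    hence "sqrt ((H2norm K (\<phi> m))\<^sup>2) \<le> sqrt (8 * \<bar>C0\<bar> / a)" by (rule real_sqrt_le_mono)
    moreover have "H2norm K (\<phi> m) \<ge> 0" by (simp add: H2norm_def)
    ultimately show "H2norm K (\<phi> m) \<le> C1" unfolding C1_def by simp
  qed
qed

end
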